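(* Let $I\subset{\bf S}^1$ be a closed interval and let $\varphi_m:I\to{\bf S}^1$ be a sequence of $C^3$ diffeomorphisms onto their images which converges to the identity in the $C^1$-topology as $m\to\infty$, and such that the Schwarzian derivatives $S\varphi_m=(\varphi_m''/\varphi_m')'-\frac12(\varphi_m''/\varphi_m')^2$ tend uniformly to $0$ on $I$. Then $\varphi_m$ converges to the identity in the $C^3$-topology on $I$. *)

theory Defs
  imports "HOL-Analysis.Analysis"
begin

text \<open>Schwarzian derivative of a map with first, second and third derivatives
  f1, f2, f3:  (f''/f')' - 1/2 (f''/f')^2, where the derivative of the quotient
  f''/f' is written out as (f''' f' - f''^2)/f'^2.\<close>
definition schwarzian :: "(real \<Rightarrow> real) \<Rightarrow> (real \<Rightarrow> real) \<Rightarrow> (real \<Rightarrow> real) \<Rightarrow> real \<Rightarrow> real" where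
  "schwarzian f1 f2 f3 x =
     (f3 x * f1 x - (f2 x)^2) / (f1 x)^2 - 1/2 * (f2 x / f1 x)^2"

end

theory Submission imports Defs begin

lemma mvt_r:
  fixes f f' :: "real \<Rightarrow> real"
  assumes "c \<le> d" "{c..d} \<subseteq> {a..b}"
    and der: "\<And>x. x\<in>{a..b} \<Longrightarrow> (f has_real_derivative f' x) (at x within {a..b})"
  shows "\<exists>z\<in>{c..d}. f d - f c = f' z * (d - c)"
proof -
  have "\<And>x. c \<le> x \<Longrightarrow> x \<le> d \<Longrightarrow> (f has_derivative (\<lambda>t. t * f' x)) (at x within {c..d})"
  proof -
    fix x assume "c \<le> x" "x \<le> d"
    then have "x \<in> {a..b}" using assms(2) by auto
    from der[OF this] have "(f has_real_derivative f' x) (at x within {c..d})"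
      using DERIV_subset assms(2) by blast
    then show "(f has_derivative (\<lambda>t. t * f' x)) (at x within {c..d})"
      by (simp add: has_field_derivative_def mult.commute[of _ "f' x"])
  qed
  from mvt_very_simple[OF assms(1) this] show ?thesis by (auto simp: mult.commute)
qed

lemma key:
  fixes g g1 g2 :: "real \<Rightarrow> real"
  assumes ab: "a < b" and h: "0 < h" "2*h \<le> b - a"
    and dg: "\<And>x. x\<in>{a..b} \<Longrightarrow> (g has_real_derivative g1 x) (at x within {a..b})"
    and dg1: "\<And>x. x\<in>{a..b} \<Longrightarrow> (g1 has_real_derivative g2 x) (at x within {a..b})"
    and b0: "\<And>x. x\<in>{a..b} \<Longrightarrow> \<bar>g x - 1\<bar> \<le> e0"
    and b2: "\<And>x. x\<in>{a..b} \<Longrightarrow> \<bar>g2 x\<bar> \<le> e2"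
    and x: "x \<in> {a..b}"
  shows "\<bar>g1 x\<bar> \<le> 2*e0/h + e2*h"
proof -
  obtain c d where cd: "c \<le> d" "d - c = h" "{c..d} \<subseteq> {a..b}" "x = c \<or> x = d"
  proof (cases "x + h \<le> b")
    case True
    then show ?thesis using that[of x "x+h"] x h by auto
  next
    case False
    then show ?thesis using that[of "x-h" x] x h by auto
  qed
  obtain z where z: "z \<in> {c..d}" "g d - g c = g1 z * (d - c)"
    using mvt_r[OF cd(1) cd(3) dg] by blast
  have "\<bar>g1 z * h\<bar> \<le> 2*e0"
  proof -
    have "c \<in> {a..b}" "d \<in> {a..b}" using cd by auto
    then have "\<bar>g d - 1\<bar> \<le> e0" "\<bar>g c - 1\<bar> \<le> e0" using b0 by auto
    then show ?thesis using z cd by (simp add: abs_le_iff)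
  qed
  then have gz: "\<bar>g1 z\<bar> \<le> 2*e0/h" using h by (simp add: abs_mult field_simps)
  have "\<bar>g1 x - g1 z\<bar> \<le> e2*h"
  proof (cases "x \<le> z")
    case True
    have s: "{x..z} \<subseteq> {a..b}" using z cd by auto
    obtain y where y: "y\<in>{x..z}" "g1 z - g1 x = g2 y * (z - x)"
      using mvt_r[OF True s dg1] by blast
    have "\<bar>g2 y\<bar> \<le> e2" using b2 y s by auto
    moreover have "\<bar>z - x\<bar> \<le> h" using z cd by auto
    ultimately have "\<bar>g2 y * (z - x)\<bar> \<le> e2 * h"
      by (simp add: abs_mult mult_mono')
    then show ?thesis using y by (simp add: abs_minus_commute)
  next
    case False
    then have F: "z \<le> x" by simp
    have s: "{z..x} \<subseteq> {a..b}" using z cd by auto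
    obtain y where y: "y\<in>{z..x}" "g1 x - g1 z = g2 y * (x - z)"
      using mvt_r[OF F s dg1] by blast
    have "\<bar>g2 y\<bar> \<le> e2" using b2 y s by auto
    moreover have "\<bar>x - z\<bar> \<le> h" using z cd by auto
    ultimately have "\<bar>g2 y * (x - z)\<bar> \<le> e2 * h"
      by (simp add: abs_mult mult_mono')
    then show ?thesis using y by simp
  qed
  then show ?thesis using gz by linarith
qed

lemma alg: fixes p q r v :: real assumes "p \<noteq> 0"
  shows "(-(1/2)) * ((((-(1/2) * (v / p) * q) * p - v * q) / p^2) * q + (v / p) * r)
     = -((r * p - q^2) / p^2 - 1/2 * (q / p)^2)/2 * v"
  using assms by (simp add: divide_simps) (simp add: algebra_simps power2_eq_square power3_eq_cube)

lemma per_m: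
  fixes f1 f2 f3 :: "real \<Rightarrow> real"
  assumes ab: "a<b" and h: "0<h" "2*h \<le> b-a"
    and d2: "\<And>x. x \<in> {a..b} \<Longrightarrow> (f1 has_real_derivative f2 x) (at x within {a..b})"
    and d3: "\<And>x. x \<in> {a..b} \<Longrightarrow> (f2 has_real_derivative f3 x) (at x within {a..b})"
    and p: "\<And>x. x\<in>{a..b} \<Longrightarrow> \<bar>f1 x - 1\<bar> \<le> \<delta>" "\<delta> \<le> 1/2"
    and s: "\<And>x. x\<in>{a..b} \<Longrightarrow> \<bar>schwarzian f1 f2 f3 x\<bar> \<le> \<sigma>"
    and x: "x\<in>{a..b}"
  shows "\<bar>f2 x\<bar> \<le> 6*(4*\<delta>/h + \<sigma>*h)"
proof -
  define w where "w = (\<lambda>x. f1 x powr (-1/2))"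
  define w1 where "w1 = (\<lambda>x. -(1/2) * (w x / f1 x) * f2 x)"
  define w2 where "w2 = (\<lambda>x. -(schwarzian f1 f2 f3 x)/2 * w x)"
  have pos: "\<And>x. x\<in>{a..b} \<Longrightarrow> f1 x \<ge> 1/2 \<and> f1 x \<le> 3/2" using p by (force simp: abs_le_iff)
  have wpos: "\<And>x. x\<in>{a..b} \<Longrightarrow> w x > 0" using pos unfolding w_def by force
  have wsq: "\<And>x. x\<in>{a..b} \<Longrightarrow> (w x)^2 * f1 x = 1"
  proof -
    fix x assume "x\<in>{a..b}"
    then have "f1 x > 0" using pos by force
    then have "(w x)^2 = f1 x powr (-1/2 + -1/2)" unfolding w_def
      by (simp only: power2_eq_square powr_add)
    also have "\<dots> = inverse (f1 x)" using \<open>f1 x > 0\<close> by (simp add: powr_minus)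
    finally show "(w x)^2 * f1 x = 1" using \<open>f1 x > 0\<close> by simp
  qed
  have dw: "\<And>x. x\<in>{a..b} \<Longrightarrow> (w has_real_derivative w1 x) (at x within {a..b})"
  proof -
    fix x assume x: "x\<in>{a..b}"
    then have fp: "f1 x > 0" using pos by force
    have "((\<lambda>x. f1 x powr (-1/2)) has_real_derivative ((-1/2) * f1 x powr (-1/2 - 1)) * f2 x) (at x within {a..b})"
      by (rule DERIV_chain2[OF has_real_derivative_powr[OF fp] d2[OF x]])
    moreover have "(-1/2) * f1 x powr (-1/2 - 1) * f2 x = w1 x" unfolding w1_def w_def
      using powr_diff[of "f1 x" "-1/2" 1] fp by simp
    ultimately show "(w has_real_derivative w1 x) (at x within {a..b})"
      unfolding w_def by simp
  qed
  have dw1: "\<And>x. x\<in>{a..b} \<Longrightarrow> (w1 has_real_derivative w2 x) (at x within {a..b})"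
  proof -
    fix x assume x: "x\<in>{a..b}"
    then have fp: "f1 x > 0" using pos by force
    have q: "((\<lambda>x. w x / f1 x) has_real_derivative (w1 x * f1 x - w x * f2 x) / (f1 x * f1 x)) (at x within {a..b})"
      by (rule DERIV_divide[OF dw[OF x] d2[OF x]]) (use fp in simp)
    have "((\<lambda>x. (w x / f1 x) * f2 x) has_real_derivative ((w1 x * f1 x - w x * f2 x) / (f1 x * f1 x)) * f2 x + f3 x * (w x / f1 x)) (at x within {a..b})"
      by (rule DERIV_mult[OF q d3[OF x]])
    then have "((\<lambda>x. (-(1/2)) * ((w x / f1 x) * f2 x)) has_real_derivative (-(1/2)) * (((w1 x * f1 x - w x * f2 x) / (f1 x * f1 x)) * f2 x + f3 x * (w x / f1 x))) (at x within {a..b})"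
      by (rule DERIV_cmult)
    then have "(w1 has_real_derivative (-(1/2)) * (((w1 x * f1 x - w x * f2 x) / (f1 x)^2) * f2 x + (w x / f1 x) * f3 x)) (at x within {a..b})"
      unfolding w1_def by (simp add: power2_eq_square mult.commute mult.assoc)
    moreover have "(-(1/2)) * (((w1 x * f1 x - w x * f2 x) / (f1 x)^2) * f2 x + (w x / f1 x) * f3 x) = w2 x"
      unfolding w2_def w1_def schwarzian_def by (rule alg) (use fp in simp)
    ultimately show "(w1 has_real_derivative w2 x) (at x within {a..b})" by simp
  qed
  have b0: "\<And>x. x\<in>{a..b} \<Longrightarrow> \<bar>w x - 1\<bar> \<le> 2*\<delta>"
  proof -
    fix x assume x: "x\<in>{a..b}"
    have wp: "w x > 0" and sq: "(w x)^2 * f1 x = 1" using wpos[OF x] wsq[OF x] .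
    have f: "f1 x \<ge> 1/2" "f1 x \<le> 3/2" "\<bar>f1 x - 1\<bar> \<le> \<delta>" using pos[OF x] p(1)[OF x] by auto
    have "\<bar>w x - 1\<bar> * (w x * f1 x + f1 x) = \<bar>1 - f1 x\<bar>"
    proof -
      have "(w x - 1) * (w x * f1 x + f1 x) = 1 - f1 x" using sq by (simp add: algebra_simps power2_eq_square)
      moreover have "w x * f1 x + f1 x > 0" using wp f by (simp add: add_pos_pos)
      ultimately show ?thesis by (metis abs_mult abs_of_pos)
    qed
    moreover have "w x * f1 x + f1 x \<ge> 1/2" proof -
      have "w x * f1 x \<ge> 0" using wp f by simp
      then show ?thesis using f by linarith
    qed
    ultimately show "\<bar>w x - 1\<bar> \<le> 2*\<delta>" using f
    proof -
      have "\<bar>w x - 1\<bar> * (1/2) \<le> \<bar>w x - 1\<bar> * (w x * f1 x + f1 x)"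
        using \<open>w x * f1 x + f1 x \<ge> 1/2\<close> by (intro mult_left_mono) auto
      then show ?thesis using \<open>\<bar>w x - 1\<bar> * (w x * f1 x + f1 x) = \<bar>1 - f1 x\<bar>\<close> f by (simp add: abs_minus_commute)
    qed
  qed
  have b2: "\<And>x. x\<in>{a..b} \<Longrightarrow> \<bar>w2 x\<bar> \<le> \<sigma>"
  proof -
    fix x assume x: "x\<in>{a..b}"
    have wp: "w x > 0" and sq: "(w x)^2 * f1 x = 1" using wpos[OF x] wsq[OF x] .
    have "w x \<le> 2"
    proof (rule ccontr)
      assume "\<not> w x \<le> 2"
      then have "w x * w x \<ge> 2 * 2" by (intro mult_mono) auto
      then have "(w x)^2 \<ge> 4" by (simp add: power2_eq_square)
      then have "(w x)^2 * f1 x \<ge> 4 * (1/2)" using pos[OF x] by (intro mult_mono) auto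
      then show False using sq by simp
    qed
    then have "\<bar>schwarzian f1 f2 f3 x\<bar> * w x \<le> \<sigma> * 2" using s[OF x] wp
      by (intro mult_mono) auto
    then show "\<bar>w2 x\<bar> \<le> \<sigma>" unfolding w2_def using wp by (simp add: abs_mult)
  qed
  have k: "\<bar>w1 x\<bar> \<le> 2*(2*\<delta>)/h + \<sigma>*h"
    by (rule key[OF ab h dw dw1 b0 b2 x])
  have "\<bar>f2 x\<bar> \<le> 6 * \<bar>w1 x\<bar>"
  proof -
    have wp: "w x > 0" and sq: "(w x)^2 * f1 x = 1" using wpos[OF x] wsq[OF x] .
    have fx: "f1 x > 0" "f1 x \<le> 3/2" using pos[OF x] by auto
    have "w x \<ge> 1/2"
    proof (rule ccontr)
      assume "\<not> w x \<ge> 1/2"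
      then have "w x * w x \<le> (1/2) * (1/2)" using wp by (intro mult_mono) auto
      then have "(w x)^2 \<le> 1/4" by (simp add: power2_eq_square)
      then have "(w x)^2 * f1 x \<le> 1/4 * (3/2)" using fx by (intro mult_mono) auto
      then show False using sq by simp
    qed
    have "f2 x = -2 * w1 x * f1 x / w x" unfolding w1_def using wp fx by (simp add: field_simps)
    then have "\<bar>f2 x\<bar> = 2 * \<bar>w1 x\<bar> * f1 x / w x" using wp fx by (simp add: abs_mult)
    also have "\<dots> \<le> 2 * \<bar>w1 x\<bar> * (3/2) / (1/2)"
      using wp fx \<open>w x \<ge> 1/2\<close> by (intro frac_le mult_left_mono) auto
    finally show ?thesis by simp
  qed
  then show ?thesis using k by simp
qed

lemma r_bound: fixes p q r sg tq :: real
  assumes p: "p \<ge> 1/2" "p \<le> 3/2" and S: "\<bar>(r*p - q^2)/p^2 - 1/2*(q/p)^2\<bar> \<le> sg"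
    and q: "\<bar>q\<bar> \<le> tq" "tq \<le> 1"
  shows "\<bar>r\<bar> \<le> 2 * sg + 3*tq"
proof -
  define S where "S = (r*p - q^2)/p^2 - 1/2*(q/p)^2"
  have p0: "p \<noteq> 0" using p by auto
  have r: "r = S*p + 3/2*(q^2/p)" unfolding S_def using p0
    by (simp add: field_simps power2_eq_square)
  have s0: "sg \<ge> 0" using S by linarith
  have "\<bar>S\<bar> \<le> sg" using S unfolding S_def .
  then have "\<bar>S\<bar> * \<bar>p\<bar> \<le> sg * (3/2)" using p by (intro mult_mono) auto
  then have Sp: "\<bar>S*p\<bar> \<le> sg * (3/2)" by (simp add: abs_mult)
  have "\<bar>q\<bar> * \<bar>q\<bar> \<le> tq * 1" using q by (intro mult_mono) auto
  then have q2: "q^2 \<le> tq" by (simp add: power2_eq_square abs_mult[symmetric])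
  have "tq * 1 \<le> tq * (2*p)" using p q by (intro mult_left_mono) auto
  then have q3: "q^2/p \<le> 2*tq" using p q2 by (simp add: divide_simps)
  have q4: "q^2/p \<ge> 0" using p by simp
  have "\<bar>r\<bar> \<le> \<bar>S*p\<bar> + 3/2*(q^2/p)" using r q4 by simp
  then show ?thesis using Sp q3 s0 by linarith
qed

theorem lemma5:
  fixes a b :: real
    and \<phi> \<phi>1 \<phi>2 \<phi>3 :: "nat \<Rightarrow> real \<Rightarrow> real"
  assumes ab: "a < b" "b - a < 1"
    and d1: "\<And>m x. x \<in> {a..b} \<Longrightarrow> (\<phi> m has_real_derivative \<phi>1 m x) (at x within {a..b})"
    and d2: "\<And>m x. x \<in> {a..b} \<Longrightarrow> (\<phi>1 m has_real_derivative \<phi>2 m x) (at x within {a..b})"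
    and d3: "\<And>m x. x \<in> {a..b} \<Longrightarrow> (\<phi>2 m has_real_derivative \<phi>3 m x) (at x within {a..b})"
    and c3: "\<And>m. continuous_on {a..b} (\<phi>3 m)"
    and nz: "\<And>m x. x \<in> {a..b} \<Longrightarrow> \<phi>1 m x \<noteq> 0"
    and inj: "\<And>m. inj_on (\<lambda>x. frac (\<phi> m x)) {a..b}"
    and C1_0: "uniform_limit {a..b} \<phi> (\<lambda>x. x) sequentially"
    and C1_1: "uniform_limit {a..b} \<phi>1 (\<lambda>x. 1) sequentially"
    and S: "uniform_limit {a..b} (\<lambda>m. schwarzian (\<phi>1 m) (\<phi>2 m) (\<phi>3 m)) (\<lambda>x. 0) sequentially"
  shows "uniform_limit {a..b} \<phi> (\<lambda>x. x) sequentially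
       \<and> uniform_limit {a..b} \<phi>1 (\<lambda>x. 1) sequentially
       \<and> uniform_limit {a..b} \<phi>2 (\<lambda>x. 0) sequentially
       \<and> uniform_limit {a..b} \<phi>3 (\<lambda>x. 0) sequentially"
proof -
  have P1: "\<And>e. e > 0 \<Longrightarrow> \<exists>N. \<forall>n\<ge>N. \<forall>x\<in>{a..b}. \<bar>\<phi>1 n x - 1\<bar> < e"
    using C1_1 unfolding uniform_limit_sequentially_iff dist_real_def by blast
  have PS: "\<And>e. e > 0 \<Longrightarrow> \<exists>N. \<forall>n\<ge>N. \<forall>x\<in>{a..b}. \<bar>schwarzian (\<phi>1 n) (\<phi>2 n) (\<phi>3 n) x\<bar> < e"
    using S unfolding uniform_limit_sequentially_iff dist_real_def by simp
  have P2: "\<exists>N. \<forall>n\<ge>N. \<forall>x\<in>{a..b}. \<bar>\<phi>2 n x\<bar> < e" if e: "e > 0" for e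
  proof -
    define h where "h = min ((b-a)/2) (e/24)"
    have h: "0 < h" "2*h \<le> b - a" "h \<le> e/24" using ab e unfolding h_def by (auto simp: min_def)
    define e1 where "e1 = min (1/2) (e*h/96)"
    have e1: "e1 > 0" "e1 \<le> 1/2" "e1 \<le> e*h/96" using e h unfolding e1_def by auto
    obtain N1 where N1: "\<And>n x. n \<ge> N1 \<Longrightarrow> x\<in>{a..b} \<Longrightarrow> \<bar>\<phi>1 n x - 1\<bar> < e1"
      using P1[OF e1(1)] by blast
    obtain N2 where N2: "\<And>n x. n \<ge> N2 \<Longrightarrow> x\<in>{a..b} \<Longrightarrow> \<bar>schwarzian (\<phi>1 n) (\<phi>2 n) (\<phi>3 n) x\<bar> < 1"
      using PS[of 1] by fastforce
    have "\<forall>n\<ge>max N1 N2. \<forall>x\<in>{a..b}. \<bar>\<phi>2 n x\<bar> < e"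
    proof (intro allI impI ballI)
      fix n x assume n: "n \<ge> max N1 N2" and x: "x \<in> {a..b}"
      have "\<bar>\<phi>2 n x\<bar> \<le> 6*(4*e1/h + 1*h)"
        by (rule per_m[OF ab(1) h(1,2) d2 d3 _ e1(2) _ x])
           (use N1 N2 n in \<open>auto intro: less_imp_le\<close>)
      moreover have "4*e1/h \<le> e/24"
      proof -
        have "4*e1 \<le> (e/24)*h" using e1 by simp
        then show ?thesis using h by (simp add: divide_simps)
      qed
      then have "6*(4*e1/h + 1*h) \<le> 6*(e/24 + e/24)" using h by (intro mult_left_mono add_mono) auto
      ultimately have "\<bar>\<phi>2 n x\<bar> \<le> 6*(e/24 + e/24)" by (rule order_trans)
      then show "\<bar>\<phi>2 n x\<bar> < e" using e by simp
    qed
    then show ?thesis by blast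
  qed
  have P3: "\<exists>N. \<forall>n\<ge>N. \<forall>x\<in>{a..b}. \<bar>\<phi>3 n x\<bar> < e" if e: "e > 0" for e
  proof -
    obtain N1 where N1: "\<And>n x. n \<ge> N1 \<Longrightarrow> x\<in>{a..b} \<Longrightarrow> \<bar>\<phi>1 n x - 1\<bar> < 1/2"
      using P1[of "1/2"] by fastforce
    obtain N2 where N2: "\<And>n x. n \<ge> N2 \<Longrightarrow> x\<in>{a..b} \<Longrightarrow> \<bar>schwarzian (\<phi>1 n) (\<phi>2 n) (\<phi>3 n) x\<bar> < e/8"
      using PS[of "e/8"] e by fastforce
    obtain N3 where N3: "\<And>n x. n \<ge> N3 \<Longrightarrow> x\<in>{a..b} \<Longrightarrow> \<bar>\<phi>2 n x\<bar> < min 1 (e/10)"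
      using P2[of "min 1 (e/10)"] e by fastforce
    have "\<forall>n\<ge>max (max N1 N2) N3. \<forall>x\<in>{a..b}. \<bar>\<phi>3 n x\<bar> < e"
    proof (intro allI impI ballI)
      fix n x assume n: "n \<ge> max (max N1 N2) N3" and x: "x \<in> {a..b}"
      have p: "\<phi>1 n x \<ge> 1/2" "\<phi>1 n x \<le> 3/2" proof -
        have "\<bar>\<phi>1 n x - 1\<bar> < 1/2" using N1[OF _ x, of n] n by auto
        then have "\<phi>1 n x - 1 < 1/2 \<and> -(\<phi>1 n x - 1) < 1/2" by (simp only: abs_less_iff)
        then show "\<phi>1 n x \<ge> 1/2" "\<phi>1 n x \<le> 3/2" by linarith+
      qed
      have "\<bar>\<phi>3 n x\<bar> \<le> 2 * (e/8) + 3 * min 1 (e/10)"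
      proof (rule r_bound[OF p, where q="\<phi>2 n x"])
        show "\<bar>(\<phi>3 n x * \<phi>1 n x - (\<phi>2 n x)^2) / (\<phi>1 n x)^2 - 1/2 * (\<phi>2 n x / \<phi>1 n x)^2\<bar> \<le> e/8"
          using N2[OF _ x, of n] n unfolding schwarzian_def by auto
        show "\<bar>\<phi>2 n x\<bar> \<le> min 1 (e/10)" using N3[OF _ x, of n] n by auto
      qed simp
      then show "\<bar>\<phi>3 n x\<bar> < e" using e by linarith
    qed
    then show ?thesis by blast
  qed
  have "uniform_limit {a..b} \<phi>2 (\<lambda>x. 0) sequentially"
    unfolding uniform_limit_sequentially_iff dist_real_def using P2 by simp
  moreover have "uniform_limit {a..b} \<phi>3 (\<lambda>x. 0) sequentially"
    unfolding uniform_limit_sequentially_iff dist_real_def using P3 by simp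
  ultimately show ?thesis using C1_0 C1_1 by blast
qed

end
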